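(* Let $f: S^1 \rightarrow S^1$ be a Morse-Smale diffeomorphism of the unit circle. Then the induced continuum map $C(f): C(S^1) \rightarrow C(S^1)$ does not have the shadowing property.
   Context: A $C^r$ diffeomorphism ($r\ge 1$) $f$ of a compact connected manifold without boundary is Morse-Smale if its nonwandering set $\Omega(f)$ consists of finitely many periodic points, all hyperbolic, and the stable and unstable manifolds of these periodic points are all mutually transversal. For a compact metric space $X$, $C(X)$ denotes the hyperspace of all nonempty compact connected subsets (subcontinua) of $X$ with the Hausdorff metric $d_H(A,B)=\inf\{\varepsilon>0: A\subset V(B,\varepsilon),\ B\subset V(A,\varepsilon)\}$, where $V(A,r)=\{x: d(x,A)<r\}$; the induced map is $C(f)(A)=f(A)$. A homeomorphism $g$ of a compact metric space $(Y,\rho)$ has the shadowing property if for every $\varepsilon>0$ there is $\delta>0$ such that every sequence $(y_n)_{n\in\mathbb{Z}}$ with $\rho(g(y_n),y_{n+1})\le\delta$ for all $n$ admits $y\in Y$ with $\rho(y_n,g^n(y))<\varepsilon$ for all $n\in\mathbb{Z}$. *)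

theory Defs
  imports "HOL-Analysis.Analysis"
begin

(* The unit circle S^1, as a subset of the complex plane, with the induced (chordal) metric. *)
definition S1 :: "complex set" where
  "S1 = sphere 0 1"

(* A C^1 diffeomorphism of S^1 (C^r with r >= 1 is covered by the case r = 1):
   f restricts to a bijection of S^1, the parametrised map t |-> f(cis t) is
   continuously differentiable, and its derivative (velocity) never vanishes
   (so the inverse is C^1 as well). *)
definition circle_C1_diffeo :: "(complex \<Rightarrow> complex) \<Rightarrow> bool" where
  "circle_C1_diffeo f \<longleftrightarrow>
     bij_betw f S1 S1 \<and>
     (\<forall>t. (\<lambda>s. f (cis s)) differentiable (at t)) \<and>
     continuous_on UNIV (\<lambda>t. vector_derivative (\<lambda>s. f (cis s)) (at t)) \<and>
     (\<forall>t. vector_derivative (\<lambda>s. f (cis s)) (at t) \<noteq> 0)"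

(* Derivative of a circle map g at p in S^1, with respect to the unit-speed
   (arclength) coordinate on S^1: d/dt g(cis t) at t = Arg p equals
   (circ_deriv g p) * i * g p. *)
definition circ_deriv :: "(complex \<Rightarrow> complex) \<Rightarrow> complex \<Rightarrow> real" where
  "circ_deriv g p = Re (vector_derivative (\<lambda>s. g (cis s)) (at (Arg p)) / (\<i> * g p))"

definition periodic_pt :: "(complex \<Rightarrow> complex) \<Rightarrow> complex \<Rightarrow> bool" where
  "periodic_pt f p \<longleftrightarrow> p \<in> S1 \<and> (\<exists>n\<ge>1. (f ^^ n) p = p)"

definition per :: "(complex \<Rightarrow> complex) \<Rightarrow> complex \<Rightarrow> nat" where
  "per f p = (LEAST n. n \<ge> 1 \<and> (f ^^ n) p = p)"

definition multiplier :: "(complex \<Rightarrow> complex) \<Rightarrow> complex \<Rightarrow> real" where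
  "multiplier f p = circ_deriv (f ^^ per f p) p"

definition hyperbolic_pt :: "(complex \<Rightarrow> complex) \<Rightarrow> complex \<Rightarrow> bool" where
  "hyperbolic_pt f p \<longleftrightarrow> periodic_pt f p \<and> \<bar>multiplier f p\<bar> \<noteq> 1"

definition nonwandering :: "(complex \<Rightarrow> complex) \<Rightarrow> complex set" where
  "nonwandering f = {x \<in> S1. \<forall>U. open U \<and> x \<in> U \<longrightarrow>
       (\<exists>n\<ge>1. (f ^^ n) ` (U \<inter> S1) \<inter> (U \<inter> S1) \<noteq> {})}"

definition stable_set :: "(complex \<Rightarrow> complex) \<Rightarrow> complex \<Rightarrow> complex set" where
  "stable_set f p = {x \<in> S1. (\<lambda>k. dist ((f ^^ k) x) ((f ^^ k) p)) \<longlonglongrightarrow> 0}"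

definition unstable_set :: "(complex \<Rightarrow> complex) \<Rightarrow> complex \<Rightarrow> complex set" where
  "unstable_set f p = {x \<in> S1.
     (\<lambda>k. dist ((inv_into S1 f ^^ k) x) ((inv_into S1 f ^^ k) p)) \<longlonglongrightarrow> 0}"

definition dim_unstable :: "(complex \<Rightarrow> complex) \<Rightarrow> complex \<Rightarrow> nat" where
  "dim_unstable f p = (if \<bar>multiplier f p\<bar> > 1 then 1 else 0)"

definition dim_stable :: "(complex \<Rightarrow> complex) \<Rightarrow> complex \<Rightarrow> nat" where
  "dim_stable f p = (if \<bar>multiplier f p\<bar> < 1 then 1 else 0)"

(* Transversality of W^u(p) and W^s(q) on S^1: at every intersection point the
   tangent spaces (subspaces of the 1-dimensional tangent line) must span it,
   i.e. at least one of them is 1-dimensional. *)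
definition transversal :: "(complex \<Rightarrow> complex) \<Rightarrow> complex \<Rightarrow> complex \<Rightarrow> bool" where
  "transversal f p q \<longleftrightarrow>
     (unstable_set f p \<inter> stable_set f q \<noteq> {} \<longrightarrow> dim_unstable f p + dim_stable f q \<ge> 1)"

definition morse_smale_circle :: "(complex \<Rightarrow> complex) \<Rightarrow> bool" where
  "morse_smale_circle f \<longleftrightarrow>
     circle_C1_diffeo f \<and>
     finite (nonwandering f) \<and>
     (\<forall>p \<in> nonwandering f. periodic_pt f p \<and> hyperbolic_pt f p) \<and>
     (\<forall>p \<in> nonwandering f. \<forall>q \<in> nonwandering f. transversal f p q \<and> transversal f q p)"

definition nbhd :: "'a::metric_space set \<Rightarrow> real \<Rightarrow> 'a set" where
  "nbhd A r = {x. infdist x A < r}"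

definition hausdorff_dist :: "'a::metric_space set \<Rightarrow> 'a set \<Rightarrow> real" where
  "hausdorff_dist A B = Inf {e. e > 0 \<and> A \<subseteq> nbhd B e \<and> B \<subseteq> nbhd A e}"

definition continua :: "'a::metric_space set \<Rightarrow> 'a set set" where
  "continua X = {A. A \<subseteq> X \<and> A \<noteq> {} \<and> compact A \<and> connected A}"

definition iter_int :: "'a set \<Rightarrow> ('a \<Rightarrow> 'a) \<Rightarrow> int \<Rightarrow> 'a \<Rightarrow> 'a" where
  "iter_int Y g n = (if n \<ge> 0 then g ^^ nat n else inv_into Y g ^^ nat (- n))"

definition shadowing :: "'a set \<Rightarrow> ('a \<Rightarrow> 'a \<Rightarrow> real) \<Rightarrow> ('a \<Rightarrow> 'a) \<Rightarrow> bool" where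
  "shadowing Y \<rho> g \<longleftrightarrow>
     (\<forall>\<epsilon>>0. \<exists>\<delta>>0. \<forall>y :: int \<Rightarrow> 'a.
        (\<forall>n. y n \<in> Y) \<and> (\<forall>n. \<rho> (g (y n)) (y (n + 1)) \<le> \<delta>) \<longrightarrow>
        (\<exists>x\<in>Y. \<forall>n. \<rho> (y n) (iter_int Y g n x) < \<epsilon>))"

end

theory Submission
  imports Defs
begin


lemma S1_iff: "z \<in> S1 \<longleftrightarrow> cmod z = 1"
  by (simp add: S1_def)

lemma S1_nz: "z \<in> S1 \<Longrightarrow> z \<noteq> 0"
  by (auto simp: S1_iff)

lemma cis_Arg_S1: "z \<in> S1 \<Longrightarrow> cis (Arg z) = z"
  by (simp add: cis_Arg S1_nz sgn_div_norm S1_iff)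

lemma cis_S1[simp]: "cis t \<in> S1"
  by (simp add: S1_iff)

lemma cis_Arg_shift: assumes "z0 \<in> S1" "z \<in> S1" shows "cis (Arg z0 + Arg (z / z0)) = z"
proof -
  have "z / z0 \<in> S1" using assms by (simp add: S1_iff norm_divide)
  then have "cis (Arg (z/z0)) = z / z0" by (rule cis_Arg_S1)
  then show ?thesis using assms cis_Arg_S1[OF assms(1)]
    by (simp add: cis_mult[symmetric] S1_nz)
qed

lemma compact_S1: "compact S1" by (simp add: S1_def)

lemma cis_vd: "((\<lambda>t. cis t) has_vector_derivative (\<i> * cis t)) (at t)"
  unfolding has_vector_derivative_complex_iff
  by (auto intro!: derivative_eq_intros simp: cis.sel)

context
  fixes f :: "complex \<Rightarrow> complex"
  assumes D: "circle_C1_diffeo f"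
begin

lemma bij: "bij_betw f S1 S1" using D by (simp add: circle_C1_diffeo_def)
lemma fS1: "z \<in> S1 \<Longrightarrow> f z \<in> S1" using bij by (auto simp: bij_betw_def)
lemma fimg: "f ` S1 = S1" using bij by (auto simp: bij_betw_def)
lemma finj: "inj_on f S1" using bij by (auto simp: bij_betw_def)

lemma Fdiff: "((\<lambda>s. f (cis s)) has_vector_derivative vector_derivative (\<lambda>s. f (cis s)) (at t)) (at t)"
  using D by (simp add: circle_C1_diffeo_def vector_derivative_works)

lemma Fcont: "isCont (\<lambda>s. f (cis s)) t"
  using Fdiff has_vector_derivative_continuous by blast

lemma fcont: "continuous_on S1 f"
  unfolding continuous_on_eq_continuous_within
proof
  fix z0 assume z0: "z0 \<in> S1"
  let ?g = "\<lambda>z. f (cis (Arg z0 + Arg (z / z0)))"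
  have "isCont (\<lambda>z. Arg (z / z0)) z0"
  proof -
    have "isCont Arg (z0 / z0)" using z0 S1_nz[OF z0]
      by (intro continuous_at_Arg) (auto simp: complex_nonpos_Reals_iff)
    moreover have "isCont (\<lambda>z. z / z0) z0" using S1_nz[OF z0] by (intro continuous_intros)
    ultimately show ?thesis using isCont_o2 by blast
  qed
  then have "isCont (\<lambda>z. Arg z0 + Arg (z / z0)) z0" by (intro continuous_intros)
  moreover have "isCont (\<lambda>s. f (cis s)) ((\<lambda>z. Arg z0 + Arg (z / z0)) z0)" by (rule Fcont)
  ultimately have "isCont ?g z0"
    by (rule isCont_o2)
  then have "continuous (at z0 within S1) ?g" by (rule continuous_at_imp_continuous_within)
  then show "continuous (at z0 within S1) f"
    by (rule continuous_transform_within[of _ _ _ 1]) (auto simp: z0 cis_Arg_shift)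
qed

definition "fi = inv_into S1 f"

lemma fiS1: "z \<in> S1 \<Longrightarrow> fi z \<in> S1"
  unfolding fi_def using fimg by (metis inv_into_into)
lemma f_fi: "z \<in> S1 \<Longrightarrow> f (fi z) = z"
  unfolding fi_def using fimg by (metis f_inv_into_f)
lemma fi_f: "z \<in> S1 \<Longrightarrow> fi (f z) = z"
  unfolding fi_def using finj by (metis inv_into_f_f)
lemma fiimg: "fi ` S1 = S1"
  using fiS1 f_fi fS1 fi_f by (metis image_eqI subsetI subset_antisym image_subsetI)
lemma ficont: "continuous_on S1 fi"
  using continuous_on_inv[OF fcont compact_S1, of fi] fi_f fimg by auto

lemma fnS1: "z \<in> S1 \<Longrightarrow> (f^^n) z \<in> S1"
  by (induction n) (auto simp: fS1)
lemma finS1: "z \<in> S1 \<Longrightarrow> (fi^^n) z \<in> S1"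
  by (induction n) (auto simp: fiS1)
lemma fn_fin: "z \<in> S1 \<Longrightarrow> (f^^n) ((fi^^n) z) = z"
proof (induction n arbitrary: z)
  case (Suc n)
  have "(f^^Suc n) ((fi^^Suc n) z) = (f^^n) (f ((fi^^Suc n) z))"
    by (simp only: funpow_Suc_right o_apply)
  also have "\<dots> = (f^^n) (f (fi ((fi^^n) z)))" by simp
  also have "\<dots> = z" using Suc by (simp add: f_fi finS1)
  finally show ?case .
qed simp
lemma fin_fn: "z \<in> S1 \<Longrightarrow> (fi^^n) ((f^^n) z) = z"
proof (induction n arbitrary: z)
  case (Suc n)
  have "(fi^^Suc n) ((f^^Suc n) z) = (fi^^n) (fi ((f^^Suc n) z))"
    by (simp only: funpow_Suc_right o_apply)
  also have "\<dots> = (fi^^n) (fi (f ((f^^n) z)))" by simp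
  also have "\<dots> = z" using Suc by (simp add: fi_f fnS1)
  finally show ?case .
qed simp
lemma fnimg: "(f^^n) ` S1 = S1"
  using fnS1 fn_fin finS1 by (metis image_eqI subsetI subset_antisym image_subsetI)
lemma fninj: "inj_on (f^^n) S1"
  by (metis fin_fn inj_onI)
lemma fncont: "continuous_on S1 (f^^n)"
proof (induction n)
  case (Suc n)
  show ?case unfolding funpow.simps
    by (rule continuous_on_compose[OF Suc]) (metis fcont continuous_on_subset fnS1 image_subsetI)
qed (simp add: continuous_on_id)
lemma fincont: "continuous_on S1 (fi^^n)"
proof (induction n)
  case (Suc n)
  show ?case unfolding funpow.simps
    by (rule continuous_on_compose[OF Suc]) (metis ficont continuous_on_subset finS1 image_subsetI)
qed (simp add: continuous_on_id)

lemma iter_diff: "\<exists>Dv. ((\<lambda>s. (f^^m) (cis s)) has_vector_derivative Dv) (at t)"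
proof (induction m arbitrary: t)
  case 0
  then show ?case using cis_vd by auto
next
  case (Suc m)
  define G where "G = (\<lambda>s. (f^^m) (cis s))"
  have GS1: "G s \<in> S1" for s unfolding G_def by (rule fnS1) simp
  obtain Dv where Dv: "(G has_vector_derivative Dv) (at t)" using Suc unfolding G_def by blast
  define a where "a = Arg (G t)"
  define th where "th = (\<lambda>s. a + Im (Ln (G s / G t)))"
  have eq: "cis (th s) = G s" for s
  proof -
    have "Ln (G s / G t) = \<i> * Arg (G s / G t)"
      using GS1[of s] GS1[of t] S1_nz
      by (simp add: Ln_Arg S1_iff norm_divide complex_eq_iff)
    then have "th s = Arg (G t) + Arg (G s / G t)" by (simp add: th_def a_def)
    then show ?thesis using cis_Arg_shift GS1 by simp
  qed
  have "((\<lambda>s. G s / G t) has_vector_derivative Dv / G t) (at t)"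
    using Dv by (auto intro!: derivative_eq_intros simp: divide_inverse)
  moreover have "(Ln has_field_derivative inverse 1) (at ((\<lambda>s. G s / G t) t))"
    using GS1[of t] S1_nz[of "G t"] has_field_derivative_Ln[of 1] by (simp add: complex_nonpos_Reals_iff)
  ultimately have "((Ln \<circ> (\<lambda>s. G s / G t)) has_vector_derivative (Dv / G t) * inverse 1) (at t)"
    by (rule field_vector_diff_chain_at)
  then have "(th has_real_derivative Im ((Dv / G t) * inverse 1)) (at t)"
    unfolding th_def by (auto intro!: derivative_eq_intros simp: o_def)
  then have th_d: "(th has_vector_derivative Im ((Dv / G t) * inverse 1)) (at t)"
    by (simp add: has_real_derivative_iff_has_vector_derivative)
  have tht: "th t = a" using GS1[of t] S1_nz by (simp add: th_def)
  have "((\<lambda>s. f (cis s)) has_vector_derivative vector_derivative (\<lambda>s. f (cis s)) (at (th t))) (at (th t))"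
    by (rule Fdiff)
  from vector_diff_chain_at[OF th_d this]
  have "\<exists>E. ((\<lambda>s. f (cis s)) \<circ> th has_vector_derivative E) (at t)" by blast
  moreover have "((\<lambda>s. f (cis s)) \<circ> th) = (\<lambda>s. (f^^Suc m) (cis s))"
    by (auto simp: o_def eq G_def)
  ultimately show ?case by auto
qed

end


lemma deriv_est:
  assumes "(H has_vector_derivative v) (at (s0::real))" "e > 0"
  shows "\<exists>d>0. \<forall>y. \<bar>y - s0\<bar> < d \<longrightarrow> (cmod v - e) * \<bar>y - s0\<bar> \<le> cmod (H y - H s0) \<and> cmod (H y - H s0) \<le> (cmod v + e) * \<bar>y - s0\<bar>"
proof -
  have "(H has_derivative (\<lambda>x. x *\<^sub>R v)) (at s0)" using assms(1) by (simp add: has_vector_derivative_def)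
  then obtain d where d: "d > 0" "\<forall>y. norm (y - s0) < d \<longrightarrow> norm (H y - H s0 - (y - s0) *\<^sub>R v) \<le> e * norm (y - s0)"
    using assms(2) unfolding has_derivative_at_alt by blast
  show ?thesis
  proof (intro exI[of _ d] conjI allI impI d(1))
    fix y assume y: "\<bar>y - s0\<bar> < d"
    have 1: "cmod (H y - H s0 - (y - s0) *\<^sub>R v) \<le> e * \<bar>y - s0\<bar>" using d y by auto
    have 2: "cmod ((y - s0) *\<^sub>R v) = \<bar>y - s0\<bar> * cmod v" by simp
    have "cmod ((y - s0) *\<^sub>R v) \<le> cmod (H y - H s0) + cmod (H y - H s0 - (y - s0) *\<^sub>R v)"
      by (metis add_diff_cancel_left' diff_add_cancel norm_triangle_ineq4)
    then show "(cmod v - e) * \<bar>y - s0\<bar> \<le> cmod (H y - H s0)" using 1 2 by (simp add: algebra_simps)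
    have "cmod (H y - H s0) \<le> cmod ((y - s0) *\<^sub>R v) + cmod (H y - H s0 - (y - s0) *\<^sub>R v)"
      by (metis add.commute diff_add_cancel norm_triangle_ineq)
    then show "cmod (H y - H s0) \<le> (cmod v + e) * \<bar>y - s0\<bar>" using 1 2 by (simp add: algebra_simps)
  qed
qed

context
  fixes f :: "complex \<Rightarrow> complex"
  assumes D: "circle_C1_diffeo f"
begin

lemma core:
  assumes p: "p \<in> S1" and pfix: "(f^^n) p = p"
  shows "\<exists>v. cmod v = \<bar>circ_deriv (f^^n) p\<bar> \<and>
    (\<forall>e>0. \<exists>\<rho>>0. \<forall>z\<in>S1. dist z p < \<rho> \<longrightarrow> (\<exists>r\<ge>0.
       (cmod v - e)*r \<le> dist ((f^^n) z) p \<and> dist ((f^^n) z) p \<le> (cmod v + e)*r \<and>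
       (1 - e)*r \<le> dist z p \<and> dist z p \<le> (1+e)*r))"
proof -
  define H where "H = (\<lambda>s. (f^^n) (cis s))"
  define s0 where "s0 = Arg p"
  have HS1: "H s \<in> S1" for s unfolding H_def by (rule fnS1[OF D]) simp
  obtain v where v: "(H has_vector_derivative v) (at s0)" using iter_diff[OF D] unfolding H_def by blast
  have vd: "vector_derivative H (at s0) = v" using v by (rule vector_derivative_at)
  have cs0: "cis s0 = p" using p by (simp add: s0_def cis_Arg_S1)
  have Hs0: "H s0 = p" using cs0 pfix by (simp add: H_def)
  have mu: "circ_deriv (f^^n) p = Re (v / (\<i> * p))"
    using vd pfix by (simp add: circ_deriv_def H_def s0_def)
  have "((\<lambda>s. H s * cnj (H s)) has_vector_derivative H s0 * cnj v + v * cnj (H s0)) (at s0)"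
    by (intro has_vector_derivative_mult v has_vector_derivative_cnj)
  moreover have "(\<lambda>s. H s * cnj (H s)) = (\<lambda>s. 1)"
  proof
    fix s show "H s * cnj (H s) = 1" using HS1[of s] complex_norm_square[of "H s"] by (simp add: S1_iff)
  qed
  ultimately have "((\<lambda>s. 1::complex) has_vector_derivative p * cnj v + v * cnj p) (at s0)" using Hs0 by simp
  then have tang: "p * cnj v + v * cnj p = 0"
    using vector_derivative_unique_at has_vector_derivative_const by metis
  have pn: "p * cnj p = 1" using p complex_norm_square[of p] by (simp add: S1_iff)
  have "cmod v = \<bar>Re (v / (\<i> * p))\<bar>"
  proof -
    define w where "w = v * cnj p"
    have "Re (p * cnj v + v * cnj p) = 0" using tang by simp
    then have w1: "Re w = 0" unfolding w_def by (simp add: algebra_simps)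
    have "cnj p = 1 / p" using pn S1_nz[OF p] by (simp add: field_simps)
    then have "v / (\<i> * p) = w / \<i>" unfolding w_def using S1_nz[OF p] by (simp add: divide_complex_def)
    then have "Re (v / (\<i> * p)) = Im w" by simp
    moreover have "cmod w = cmod v" unfolding w_def using p by (simp add: norm_mult S1_iff)
    moreover have "cmod w = \<bar>Im w\<bar>" using w1 by (simp add: cmod_def)
    ultimately show ?thesis by simp
  qed
  then have vmu: "cmod v = \<bar>circ_deriv (f^^n) p\<bar>" using mu by simp
  have cisv: "((\<lambda>s. cis s) has_vector_derivative (\<i> * p)) (at s0)" using cis_vd[of s0] cs0 by simp
  have ip: "cmod (\<i> * p) = 1" using p by (simp add: norm_mult S1_iff)
  show ?thesis
  proof (intro exI[of _ v] conjI vmu allI impI)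
    fix e :: real assume e: "e > 0"
    obtain d1 where d1: "d1 > 0" "\<forall>y. \<bar>y - s0\<bar> < d1 \<longrightarrow> (cmod v - e) * \<bar>y - s0\<bar> \<le> cmod (H y - H s0) \<and> cmod (H y - H s0) \<le> (cmod v + e) * \<bar>y - s0\<bar>"
      using deriv_est[OF v e] by blast
    obtain d2 where d2: "d2 > 0" "\<forall>y. \<bar>y - s0\<bar> < d2 \<longrightarrow> (cmod (\<i> * p) - e) * \<bar>y - s0\<bar> \<le> cmod (cis y - cis s0) \<and> cmod (cis y - cis s0) \<le> (cmod (\<i> * p) + e) * \<bar>y - s0\<bar>"
      using deriv_est[OF cisv e] by blast
    have "isCont (\<lambda>z. Arg (z / p)) p"
    proof -
      have "isCont Arg ((\<lambda>z. z / p) p)" using S1_nz[OF p]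
        by (intro continuous_at_Arg) (auto simp: complex_nonpos_Reals_iff)
      moreover have "isCont (\<lambda>z. z / p) p" using S1_nz[OF p] by (intro continuous_intros)
      ultimately show ?thesis using isCont_o2 by blast
    qed
    then obtain \<rho> where rho: "\<rho> > 0" "\<forall>z. dist z p < \<rho> \<longrightarrow> dist (Arg (z / p)) (Arg (p / p)) < min d1 d2"
      unfolding continuous_at_eps_delta using d1(1) d2(1) by (meson min_less_iff_conj)
    show "\<exists>\<rho>>0. \<forall>z\<in>S1. dist z p < \<rho> \<longrightarrow> (\<exists>r\<ge>0.
       (cmod v - e)*r \<le> dist ((f^^n) z) p \<and> dist ((f^^n) z) p \<le> (cmod v + e)*r \<and>
       (1 - e)*r \<le> dist z p \<and> dist z p \<le> (1+e)*r)"
    proof (rule exI[of _ \<rho>], intro conjI rho(1) ballI impI)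
      fix z assume z: "z \<in> S1" "dist z p < \<rho>"
      define y where "y = s0 + Arg (z / p)"
      have y1: "\<bar>y - s0\<bar> < d1" "\<bar>y - s0\<bar> < d2" using rho(2) z(2) S1_nz[OF p] by (auto simp: y_def dist_real_def)
      have cy: "cis y = z" unfolding y_def s0_def using cis_Arg_shift[OF p z(1)] .
      have Hy: "H y = (f^^n) z" using cy by (simp add: H_def)
      show "\<exists>r\<ge>0. (cmod v - e)*r \<le> dist ((f^^n) z) p \<and> dist ((f^^n) z) p \<le> (cmod v + e)*r \<and>
       (1 - e)*r \<le> dist z p \<and> dist z p \<le> (1+e)*r"
      proof (rule exI[of _ "\<bar>y - s0\<bar>"], intro conjI)
        note A = d1(2)[rule_format, OF y1(1)] and B = d2(2)[rule_format, OF y1(2)]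
        show "(cmod v - e) * \<bar>y - s0\<bar> \<le> dist ((f ^^ n) z) p" using A Hy Hs0 by (simp add: dist_norm)
        show "dist ((f ^^ n) z) p \<le> (cmod v + e) * \<bar>y - s0\<bar>" using A Hy Hs0 by (simp add: dist_norm)
        show "(1 - e) * \<bar>y - s0\<bar> \<le> dist z p" using B cy cs0 ip by (simp add: dist_norm)
        show "dist z p \<le> (1 + e) * \<bar>y - s0\<bar>" using B cy cs0 ip by (simp add: dist_norm)
      qed simp
    qed
  qed
qed

lemma repel:
  assumes p: "p \<in> S1" and pfix: "(f^^n) p = p" and gt: "\<bar>circ_deriv (f^^n) p\<bar> > 1"
  shows "\<exists>\<rho>>0. \<exists>lam>1. \<forall>z\<in>S1. dist z p < \<rho> \<longrightarrow> lam * dist z p \<le> dist ((f^^n) z) p"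
proof -
  obtain v where v: "cmod v = \<bar>circ_deriv (f^^n) p\<bar>" and
    est: "\<forall>e>0. \<exists>\<rho>>0. \<forall>z\<in>S1. dist z p < \<rho> \<longrightarrow> (\<exists>r\<ge>0.
       (cmod v - e)*r \<le> dist ((f^^n) z) p \<and> dist ((f^^n) z) p \<le> (cmod v + e)*r \<and>
       (1 - e)*r \<le> dist z p \<and> dist z p \<le> (1+e)*r)"
    using core[OF p pfix] by blast
  define e where "e = (cmod v - 1) / 3"
  have e: "e > 0" using v gt by (simp add: e_def field_simps)
  obtain \<rho> where rho: "\<rho> > 0" "\<forall>z\<in>S1. dist z p < \<rho> \<longrightarrow> (\<exists>r\<ge>0.
       (cmod v - e)*r \<le> dist ((f^^n) z) p \<and> dist ((f^^n) z) p \<le> (cmod v + e)*r \<and>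
       (1 - e)*r \<le> dist z p \<and> dist z p \<le> (1+e)*r)"
    using est[rule_format, OF e(1)] by blast
  define lam where "lam = (cmod v - e) / (1 + e)"
  have "cmod v - e > 1 + e" using v gt by (simp add: e_def field_simps)
  then have l1: "lam > 1" using e by (simp add: lam_def)
  show ?thesis
  proof (rule exI[of _ \<rho>], rule conjI[OF rho(1)], rule exI[of _ lam], rule conjI[OF l1(1)], intro ballI impI)
    fix z assume z: "z \<in> S1" "dist z p < \<rho>"
    obtain r where r: "r \<ge> 0" "(cmod v - e)*r \<le> dist ((f^^n) z) p" "dist z p \<le> (1+e)*r"
      using rho(2)[rule_format, OF z] by blast
    have "lam * dist z p \<le> lam * ((1+e)*r)" using r(3) l1 by (intro mult_left_mono) auto
    also have "\<dots> = (cmod v - e) * r" using e by (simp add: lam_def)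
    finally show "lam * dist z p \<le> dist ((f^^n) z) p" using r(2) by linarith
  qed
qed

lemma attract:
  assumes p: "p \<in> S1" and pfix: "(f^^n) p = p" and lt: "\<bar>circ_deriv (f^^n) p\<bar> < 1"
  shows "\<exists>\<rho>>0. \<exists>lam<1. \<forall>z\<in>S1. dist z p < \<rho> \<longrightarrow> dist ((f^^n) z) p \<le> lam * dist z p"
proof -
  obtain v where v: "cmod v = \<bar>circ_deriv (f^^n) p\<bar>" and
    est: "\<forall>e>0. \<exists>\<rho>>0. \<forall>z\<in>S1. dist z p < \<rho> \<longrightarrow> (\<exists>r\<ge>0.
       (cmod v - e)*r \<le> dist ((f^^n) z) p \<and> dist ((f^^n) z) p \<le> (cmod v + e)*r \<and>
       (1 - e)*r \<le> dist z p \<and> dist z p \<le> (1+e)*r)"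
    using core[OF p pfix] by blast
  define e where "e = (1 - cmod v) / 3"
  have e: "e > 0" "e < 1/2" using v lt by (auto simp: e_def)
  obtain \<rho> where rho: "\<rho> > 0" "\<forall>z\<in>S1. dist z p < \<rho> \<longrightarrow> (\<exists>r\<ge>0.
       (cmod v - e)*r \<le> dist ((f^^n) z) p \<and> dist ((f^^n) z) p \<le> (cmod v + e)*r \<and>
       (1 - e)*r \<le> dist z p \<and> dist z p \<le> (1+e)*r)"
    using est[rule_format, OF e(1)] by blast
  define lam where "lam = (cmod v + e) / (1 - e)"
  have "cmod v + e < 1 - e" using v lt by (simp add: e_def field_simps)
  then have l1: "lam < 1" "lam \<ge> 0" using e by (simp_all add: lam_def)
  show ?thesis
  proof (rule exI[of _ \<rho>], rule conjI[OF rho(1)], rule exI[of _ lam], rule conjI[OF l1(1)], intro ballI impI)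
    fix z assume z: "z \<in> S1" "dist z p < \<rho>"
    obtain r where r: "r \<ge> 0" "dist ((f^^n) z) p \<le> (cmod v + e)*r" "(1 - e)*r \<le> dist z p"
      using rho(2)[rule_format, OF z] by blast
    have "(cmod v + e) * r = lam * ((1 - e)*r)" using e by (simp add: lam_def)
    also have "\<dots> \<le> lam * dist z p" using r(3) l1 by (intro mult_left_mono) auto
    finally show "dist ((f^^n) z) p \<le> lam * dist z p" using r(2) by linarith
  qed
qed

end


lemma S1_infinite: "infinite S1"
proof
  assume fin: "finite S1"
  have sg: "sgn (cis x) = cis x" for x by (simp add: sgn_div_norm)
  have A: "Arg (cis x) = x" if "x \<in> {0..1}" for x :: real
  proof (rule cis_Arg_unique[OF sg])
    show "- pi < x" using that pi_gt3 by simp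
    show "x \<le> pi" using that pi_gt3 by simp
  qed
  have "inj_on cis {0..1}" by (metis A inj_onI)
  moreover have "cis ` {0..1} \<subseteq> S1" by auto
  ultimately have "finite {0..1::real}" using fin finite_imageD finite_subset by blast
  then show False using infinite_Icc[of "0::real" 1] by simp
qed

lemma no_global_attractor:
  fixes \<phi> :: "complex \<Rightarrow> complex" and P :: "complex set" and N :: "complex \<Rightarrow> nat"
  assumes cont: "\<And>m. continuous_on S1 (\<phi>^^m)" and img: "\<And>m. (\<phi>^^m) ` S1 = S1"
    and fin: "finite P" and PS: "P \<subseteq> S1"
    and Npos: "\<And>p. p \<in> P \<Longrightarrow> N p \<ge> 1"
    and per: "\<And>p. p \<in> P \<Longrightarrow> (\<phi>^^N p) p = p"
    and contr: "\<And>p. p \<in> P \<Longrightarrow> \<exists>\<rho>>0. \<exists>lam. 0 \<le> lam \<and> lam < 1 \<and> (\<forall>z\<in>S1. dist z p < \<rho> \<longrightarrow> dist ((\<phi>^^N p) z) p \<le> lam * dist z p)"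
    and acc: "\<And>z. z \<in> S1 \<Longrightarrow> \<exists>p\<in>P. \<forall>e>0. \<exists>m. dist ((\<phi>^^m) z) p < e"
  shows False
proof -
  have mapsto: "(\<phi>^^m) z \<in> S1" if "z \<in> S1" for m z using img[of m] that by blast
  have "1 \<in> S1" by (simp add: S1_iff)
  then have Pne: "P \<noteq> {}" using acc by blast
  define C where "C = (\<Union>p\<in>P. (\<lambda>r. (\<phi>^^r) p) ` {..<N p})"
  have Cfin: "finite C" unfolding C_def using fin by (intro finite_UN_I) simp_all
  obtain p0 where p0: "p0 \<in> P" using Pne by blast
  have "(\<phi>^^0) p0 \<in> C" unfolding C_def using p0 Npos[OF p0] by (intro UN_I[OF p0] imageI) simp
  then have Cne: "C \<noteq> {}" by blast
  obtain w where w: "w \<in> S1" "w \<notin> C"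
  proof -
    have "\<not> S1 \<subseteq> C" using S1_infinite Cfin finite_subset by blast
    then show ?thesis using that by blast
  qed
  define \<eta> where "\<eta> = infdist w C"
  have eta: "\<eta> > 0" unfolding \<eta>_def using w Cfin Cne
    by (intro infdist_pos_not_in_closed finite_imp_closed) simp_all
  have sig: "\<exists>\<sigma>>0. \<exists>lam. 0 \<le> lam \<and> lam < 1 \<and> (\<forall>z\<in>S1. dist z p < \<sigma> \<longrightarrow> dist ((\<phi>^^N p) z) p \<le> lam * dist z p)
       \<and> (\<forall>r<N p. \<forall>z\<in>S1. dist z p < \<sigma> \<longrightarrow> dist ((\<phi>^^r) z) ((\<phi>^^r) p) < \<eta>)" if p: "p \<in> P" for p
  proof -
    obtain \<rho> lam where r: "\<rho> > 0" "0 \<le> lam" "lam < 1" "\<forall>z\<in>S1. dist z p < \<rho> \<longrightarrow> dist ((\<phi>^^N p) z) p \<le> lam * dist z p"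
      using contr[OF p] by blast
    have pS: "p \<in> S1" using p PS by auto
    have "\<forall>r\<in>{..<N p}. eventually (\<lambda>z. dist ((\<phi>^^r) z) ((\<phi>^^r) p) < \<eta>) (at p within S1)"
    proof
      fix r assume "r \<in> {..<N p}"
      have "((\<phi>^^r) \<longlongrightarrow> (\<phi>^^r) p) (at p within S1)"
        using cont[of r] pS by (meson continuous_on_def)
      then show "eventually (\<lambda>z. dist ((\<phi>^^r) z) ((\<phi>^^r) p) < \<eta>) (at p within S1)"
        using eta by (rule tendstoD)
    qed
    then have "eventually (\<lambda>z. \<forall>r\<in>{..<N p}. dist ((\<phi>^^r) z) ((\<phi>^^r) p) < \<eta>) (at p within S1)"
      by (intro eventually_ball_finite) auto
    then obtain d where d: "d > 0" "\<forall>z\<in>S1. z \<noteq> p \<and> dist z p < d \<longrightarrow> (\<forall>r\<in>{..<N p}. dist ((\<phi>^^r) z) ((\<phi>^^r) p) < \<eta>)"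
      unfolding eventually_at by blast
    show ?thesis
    proof (rule exI[of _ "min d \<rho>"], intro conjI exI[of _ lam])
      show "min d \<rho> > 0" using d r by simp
      show "0 \<le> lam" "lam < 1" using r by auto
      show "\<forall>z\<in>S1. dist z p < min d \<rho> \<longrightarrow> dist ((\<phi>^^N p) z) p \<le> lam * dist z p" using r by auto
      show "\<forall>r<N p. \<forall>z\<in>S1. dist z p < min d \<rho> \<longrightarrow> dist ((\<phi>^^r) z) ((\<phi>^^r) p) < \<eta>"
      proof (intro allI impI ballI)
        fix r z assume rz: "r < N p" "z \<in> S1" "dist z p < min d \<rho>"
        show "dist ((\<phi>^^r) z) ((\<phi>^^r) p) < \<eta>"
        proof (cases "z = p")
          case True then show ?thesis using eta by simp
        next
          case False then show ?thesis using d rz by auto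
        qed
      qed
    qed
  qed
  have "\<forall>p. \<exists>xy. p \<in> P \<longrightarrow> (let x = fst xy; y = snd xy in x > 0 \<and> 0 \<le> y \<and> y < 1 \<and>
       (\<forall>z\<in>S1. dist z p < x \<longrightarrow> dist ((\<phi>^^N p) z) p \<le> y * dist z p)
       \<and> (\<forall>r<N p. \<forall>z\<in>S1. dist z p < x \<longrightarrow> dist ((\<phi>^^r) z) ((\<phi>^^r) p) < \<eta>))"
  proof
    fix p show "\<exists>xy. p \<in> P \<longrightarrow> (let x = fst xy; y = snd xy in x > 0 \<and> 0 \<le> y \<and> y < 1 \<and>
       (\<forall>z\<in>S1. dist z p < x \<longrightarrow> dist ((\<phi>^^N p) z) p \<le> y * dist z p)
       \<and> (\<forall>r<N p. \<forall>z\<in>S1. dist z p < x \<longrightarrow> dist ((\<phi>^^r) z) ((\<phi>^^r) p) < \<eta>))"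
    proof (cases "p \<in> P")
      case True
      then obtain x y where "x > 0 \<and> 0 \<le> y \<and> y < 1 \<and>
       (\<forall>z\<in>S1. dist z p < x \<longrightarrow> dist ((\<phi>^^N p) z) p \<le> y * dist z p)
       \<and> (\<forall>r<N p. \<forall>z\<in>S1. dist z p < x \<longrightarrow> dist ((\<phi>^^r) z) ((\<phi>^^r) p) < \<eta>)" using sig by blast
      then show ?thesis by (intro exI[of _ "(x,y)"]) simp
    qed simp
  qed
  from choice[OF this] obtain F where F: "\<forall>p. p \<in> P \<longrightarrow> (let x = fst (F p); y = snd (F p) in x > 0 \<and> 0 \<le> y \<and> y < 1 \<and>
       (\<forall>z\<in>S1. dist z p < x \<longrightarrow> dist ((\<phi>^^N p) z) p \<le> y * dist z p)
       \<and> (\<forall>r<N p. \<forall>z\<in>S1. dist z p < x \<longrightarrow> dist ((\<phi>^^r) z) ((\<phi>^^r) p) < \<eta>))" by blast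
  define \<sigma> where "\<sigma> = (\<lambda>p. fst (F p))"
  define lam where "lam = (\<lambda>p. snd (F p))"
  have SL: "\<And>p. p \<in> P \<Longrightarrow> \<sigma> p > 0 \<and> 0 \<le> lam p \<and> lam p < 1 \<and>
       (\<forall>z\<in>S1. dist z p < \<sigma> p \<longrightarrow> dist ((\<phi>^^N p) z) p \<le> lam p * dist z p)
       \<and> (\<forall>r<N p. \<forall>z\<in>S1. dist z p < \<sigma> p \<longrightarrow> dist ((\<phi>^^r) z) ((\<phi>^^r) p) < \<eta>)"
    using F unfolding \<sigma>_def lam_def Let_def by blast
  have inv: "((\<phi>^^N p)^^q) u \<in> S1 \<and> dist (((\<phi>^^N p)^^q) u) p < \<sigma> p"
    if p: "p \<in> P" and u: "u \<in> S1" "dist u p < \<sigma> p" for p q u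
  proof (induction q)
    case 0 then show ?case using u by simp
  next
    case (Suc q)
    let ?u = "((\<phi>^^N p)^^q) u"
    have "dist ((\<phi>^^N p) ?u) p \<le> lam p * dist ?u p" using SL[OF p] Suc by blast
    also have "\<dots> \<le> dist ?u p" using SL[OF p] by (simp add: mult_left_le_one_le)
    finally show ?case using Suc mapsto by auto
  qed
  have "\<forall>pm. \<exists>A. open A \<and> A \<inter> S1 = (\<phi>^^snd pm) -` ball (fst pm) (\<sigma> (fst pm)) \<inter> S1"
    using cont unfolding continuous_on_open_invariant by auto
  from choice[OF this] obtain U where U: "\<And>pm. open (U pm) \<and> U pm \<inter> S1 = (\<phi>^^snd pm) -` ball (fst pm) (\<sigma> (fst pm)) \<inter> S1"
    by blast
  have cover: "S1 \<subseteq> \<Union> (U ` (P \<times> UNIV))"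
  proof
    fix z assume z: "z \<in> S1"
    obtain p where p: "p \<in> P" "\<forall>e>0. \<exists>m. dist ((\<phi>^^m) z) p < e" using acc[OF z] by blast
    then obtain m where "dist ((\<phi>^^m) z) p < \<sigma> p" using SL[OF p(1)] by blast
    then have "z \<in> U (p, m)" using U[of "(p,m)"] z by (auto simp: dist_commute)
    then show "z \<in> \<Union> (U ` (P \<times> UNIV))" using p by blast
  qed
  obtain C' where C': "C' \<subseteq> P \<times> UNIV" "finite C'" "S1 \<subseteq> \<Union> (U ` C')"
    using compactE_image[OF compact_S1, of "P \<times> UNIV" U] U cover by blast
  define M where "M = Max (insert 0 (snd ` C'))"
  have Mge: "m \<le> M" if "(p, m) \<in> C'" for p m
    unfolding M_def using C'(2) that by (intro Max_ge) force+
  obtain z where z: "z \<in> S1" "(\<phi>^^M) z = w" using img[of M] w(1) by (metis imageE)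
  then obtain pm0 where pm0: "pm0 \<in> C'" "z \<in> U pm0" using C'(3) by blast
  obtain p m where "pm0 = (p, m)" by (cases pm0)
  then have pm: "(p, m) \<in> C'" "z \<in> U (p, m)" using pm0 by auto
  have p: "p \<in> P" using pm C' by auto
  have m: "m \<le> M" using Mge pm by auto
  define u where "u = (\<phi>^^m) z"
  have "z \<in> U (p, m) \<inter> S1" using pm z by blast
  then have "z \<in> (\<phi> ^^ m) -` ball p (\<sigma> p)" using U[of "(p,m)"] by simp
  then have u: "u \<in> S1" "dist u p < \<sigma> p" using z mapsto by (auto simp: u_def dist_commute)
  define q where "q = (M - m) div N p"
  define r where "r = (M - m) mod N p"
  have r: "r < N p" using Npos[OF p] by (simp add: r_def)
  have "M = r + (N p * q) + m" using m by (simp add: q_def r_def)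
  then have "(\<phi>^^M) z = (\<phi>^^r) (((\<phi>^^N p)^^q) u)"
    by (simp add: u_def funpow_add funpow_mult)
  moreover have "dist ((\<phi>^^r) (((\<phi>^^N p)^^q) u)) ((\<phi>^^r) p) < \<eta>"
    using SL[OF p] inv[OF p u] r by blast
  moreover have "(\<phi>^^r) p \<in> C" using p r unfolding C_def by blast
  ultimately have "infdist w C < \<eta>" using z(2) by (metis infdist_le le_less_trans)
  then show False by (simp add: \<eta>_def)
qed


lemma acc_gen:
  fixes \<phi> f :: "complex \<Rightarrow> complex"
  assumes inS: "\<And>m. (\<phi>^^m) z \<in> S1"
    and link: "\<And>i j. i < j \<Longrightarrow> \<exists>n\<ge>1. (f^^n) ((\<phi>^^i) z) = (\<phi>^^j) z \<or> (f^^n) ((\<phi>^^j) z) = (\<phi>^^i) z"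
  shows "\<exists>l\<in>nonwandering f. \<forall>e>0. \<exists>m. dist ((\<phi>^^m) z) l < e"
proof -
  have "seq_compact S1" using compact_S1 by (rule compact_imp_seq_compact)
  then obtain l r where l: "l \<in> S1" "strict_mono r" "((\<lambda>m. (\<phi>^^m) z) \<circ> r) \<longlonglongrightarrow> l"
    by (rule seq_compactE[of S1 "\<lambda>m. (\<phi>^^m) z"]) (use inS in auto)
  have lim: "(\<lambda>i. (\<phi>^^(r i)) z) \<longlonglongrightarrow> l" using l(3) by (simp add: o_def)
  have "l \<in> nonwandering f"
    unfolding nonwandering_def
  proof (intro CollectI conjI allI impI l(1))
    fix U assume U: "open U \<and> l \<in> U"
    have "eventually (\<lambda>i. (\<phi>^^(r i)) z \<in> U) sequentially"
      using topological_tendstoD[OF lim] U by blast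
    then obtain I where I: "\<And>i. i \<ge> I \<Longrightarrow> (\<phi>^^(r i)) z \<in> U" unfolding eventually_sequentially by blast
    have lt: "r I < r (Suc I)" using l(2) by (simp add: strict_mono_def)
    obtain n where n: "n \<ge> 1" "(f^^n) ((\<phi>^^(r I)) z) = (\<phi>^^(r (Suc I))) z \<or> (f^^n) ((\<phi>^^(r (Suc I))) z) = (\<phi>^^(r I)) z"
      using link[OF lt] by blast
    have a: "(\<phi>^^(r I)) z \<in> U \<inter> S1" "(\<phi>^^(r (Suc I))) z \<in> U \<inter> S1" using I[of I] I[of "Suc I"] inS by auto
    show "\<exists>n\<ge>1. (f ^^ n) ` (U \<inter> S1) \<inter> (U \<inter> S1) \<noteq> {}"
    proof (intro exI[of _ n] conjI n(1))
      show "(f ^^ n) ` (U \<inter> S1) \<inter> (U \<inter> S1) \<noteq> {}"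
        using n(2)
      proof
        assume "(f^^n) ((\<phi>^^(r I)) z) = (\<phi>^^(r (Suc I))) z"
        then have "(\<phi>^^(r (Suc I))) z \<in> (f ^^ n) ` (U \<inter> S1)" using a(1) by (intro image_eqI[of _ _ "(\<phi>^^(r I)) z"]) auto
        then show ?thesis using a(2) by blast
      next
        assume "(f^^n) ((\<phi>^^(r (Suc I))) z) = (\<phi>^^(r I)) z"
        then have "(\<phi>^^(r I)) z \<in> (f ^^ n) ` (U \<inter> S1)" using a(2) by (intro image_eqI[of _ _ "(\<phi>^^(r (Suc I))) z"]) auto
        then show ?thesis using a(1) by blast
      qed
    qed
  qed
  moreover have "\<forall>e>0. \<exists>m. dist ((\<phi>^^m) z) l < e"
  proof (intro allI impI)
    fix e :: real assume e: "e > 0"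
    have "eventually (\<lambda>i. dist ((\<phi>^^(r i)) z) l < e) sequentially" using lim e by (rule tendstoD)
    then obtain I where "\<And>i. i \<ge> I \<Longrightarrow> dist ((\<phi>^^(r i)) z) l < e" unfolding eventually_sequentially by blast
    then show "\<exists>m. dist ((\<phi>^^m) z) l < e" by blast
  qed
  ultimately show ?thesis by blast
qed

lemma per_props: assumes "periodic_pt f p" shows "per f p \<ge> 1" "(f^^per f p) p = p"
proof -
  have ex: "\<exists>n. n \<ge> 1 \<and> (f^^n) p = p" using assms by (auto simp: periodic_pt_def)
  show "per f p \<ge> 1" "(f^^per f p) p = p" unfolding per_def using LeastI_ex[OF ex] by auto
qed

context
  fixes f :: "complex \<Rightarrow> complex"
  assumes D: "circle_C1_diffeo f"
begin

lemma fin_fix: assumes "p \<in> S1" "(f^^n) p = p" shows "(fi f^^n) p = p"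
  using fin_fn[OF D assms(1), of n] assms(2) by simp

lemma finimg: "(fi f^^n) ` S1 = S1"
proof
  show "(fi f^^n) ` S1 \<subseteq> S1" using finS1[OF D] by blast
  show "S1 \<subseteq> (fi f^^n) ` S1"
  proof
    fix z assume z: "z \<in> S1"
    then have "z = (fi f^^n) ((f^^n) z)" using fin_fn[OF D z] by simp
    then show "z \<in> (fi f^^n) ` S1" using fnS1[OF D z] by blast
  qed
qed

lemma repel_inv:
  assumes p: "p \<in> S1" and pfix: "(f^^n) p = p" and gt: "\<bar>circ_deriv (f^^n) p\<bar> > 1"
  shows "\<exists>\<sigma>>0. \<exists>mu. 0 \<le> mu \<and> mu < 1 \<and> (\<forall>z\<in>S1. dist z p < \<sigma> \<longrightarrow> dist ((fi f^^n) z) p \<le> mu * dist z p)"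
proof -
  obtain \<rho> lam where r: "\<rho> > 0" "lam > 1" "\<forall>z\<in>S1. dist z p < \<rho> \<longrightarrow> lam * dist z p \<le> dist ((f^^n) z) p"
    using repel[OF D p pfix gt] by blast
  have fp: "(fi f^^n) p = p" by (rule fin_fix[OF p pfix])
  obtain \<sigma> where s: "\<sigma> > 0" "\<forall>z\<in>S1. dist z p < \<sigma> \<longrightarrow> dist ((fi f^^n) z) ((fi f^^n) p) < \<rho>"
    using fincont[OF D, of n] p r(1) unfolding continuous_on_iff by blast
  show ?thesis
  proof (rule exI[of _ \<sigma>], rule conjI[OF s(1)], rule exI[of _ "1/lam"], intro conjI ballI impI)
    show "0 \<le> 1/lam" "1/lam < 1" using r(2) by auto
    fix z assume z: "z \<in> S1" "dist z p < \<sigma>"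
    define w where "w = (fi f^^n) z"
    have w: "w \<in> S1" "dist w p < \<rho>" using s(2) z fp finS1[OF D z(1)] by (auto simp: w_def)
    have "(f^^n) w = z" using fn_fin[OF D z(1)] by (simp add: w_def)
    then have "lam * dist w p \<le> dist z p" using r(3) w by auto
    then show "dist ((fi f^^n) z) p \<le> 1/lam * dist z p" using r(2) by (simp add: w_def field_simps)
  qed
qed

lemma rep_att_exist:
  assumes MS: "morse_smale_circle f"
  shows "\<exists>p\<in>nonwandering f. \<bar>multiplier f p\<bar> > 1" "\<exists>q\<in>nonwandering f. \<bar>multiplier f q\<bar> < 1"
proof -
  let ?P = "nonwandering f"
  have fin: "finite ?P" and PP: "\<And>p. p \<in> ?P \<Longrightarrow> periodic_pt f p \<and> hyperbolic_pt f p"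
    using MS by (auto simp: morse_smale_circle_def)
  have PS: "?P \<subseteq> S1" by (auto simp: nonwandering_def)
  have Npos: "\<And>p. p \<in> ?P \<Longrightarrow> per f p \<ge> 1" and Nfix: "\<And>p. p \<in> ?P \<Longrightarrow> (f^^per f p) p = p"
    using PP per_props by blast+
  have ne1: "\<And>p. p \<in> ?P \<Longrightarrow> \<bar>multiplier f p\<bar> \<noteq> 1" using PP by (auto simp: hyperbolic_pt_def)
  show "\<exists>p\<in>?P. \<bar>multiplier f p\<bar> > 1"
  proof (rule ccontr)
    assume "\<not> ?thesis"
    then have lt: "\<And>p. p \<in> ?P \<Longrightarrow> \<bar>circ_deriv (f^^per f p) p\<bar> < 1"
      using ne1 by (force simp: multiplier_def)
    show False
    proof (rule no_global_attractor[of f ?P "per f"])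
      show "\<And>m. continuous_on S1 (f^^m)" by (rule fncont[OF D])
      show "\<And>m. (f^^m) ` S1 = S1" by (rule fnimg[OF D])
      show "finite ?P" "?P \<subseteq> S1" by (fact fin, fact PS)
      show "\<And>p. p \<in> ?P \<Longrightarrow> per f p \<ge> 1" by (fact Npos)
      show "\<And>p. p \<in> ?P \<Longrightarrow> (f^^per f p) p = p" by (fact Nfix)
    next
      fix p assume p: "p \<in> ?P"
      obtain \<rho> lam where r: "\<rho> > 0" "lam < 1" "\<forall>z\<in>S1. dist z p < \<rho> \<longrightarrow> dist ((f^^per f p) z) p \<le> lam * dist z p"
        using attract[OF D _ Nfix[OF p] lt[OF p]] p PS by blast
      show "\<exists>\<rho>>0. \<exists>lam. 0 \<le> lam \<and> lam < 1 \<and> (\<forall>z\<in>S1. dist z p < \<rho> \<longrightarrow> dist ((f^^per f p) z) p \<le> lam * dist z p)"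
      proof (rule exI[of _ \<rho>], rule conjI[OF r(1)], rule exI[of _ "max lam 0"], intro conjI ballI impI)
        show "0 \<le> max lam 0" "max lam 0 < 1" using r(2) by auto
        fix z assume "z \<in> S1" "dist z p < \<rho>"
        then have "dist ((f^^per f p) z) p \<le> lam * dist z p" using r(3) by blast
        also have "\<dots> \<le> max lam 0 * dist z p" by (intro mult_right_mono) auto
        finally show "dist ((f^^per f p) z) p \<le> max lam 0 * dist z p" .
      qed
    next
      fix z assume z: "z \<in> S1"
      show "\<exists>p\<in>?P. \<forall>e>0. \<exists>m. dist ((f^^m) z) p < e"
      proof (rule acc_gen)
        show "\<And>m. (f^^m) z \<in> S1" using fnS1[OF D z] .
        fix i j :: nat assume "i < j"
        have "(f^^((j - i) + i)) z = (f^^(j - i)) ((f^^i) z)" by (simp add: funpow_add)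
        moreover have "(j - i) + i = j" using \<open>i < j\<close> by simp
        ultimately have "(f^^(j - i)) ((f^^i) z) = (f^^j) z" by simp
        then show "\<exists>n\<ge>1. (f^^n) ((f^^i) z) = (f^^j) z \<or> (f^^n) ((f^^j) z) = (f^^i) z"
          using \<open>i < j\<close> by (intro exI[of _ "j - i"]) auto
      qed
    qed
  qed
  show "\<exists>q\<in>?P. \<bar>multiplier f q\<bar> < 1"
  proof (rule ccontr)
    assume "\<not> ?thesis"
    then have gt: "\<And>p. p \<in> ?P \<Longrightarrow> \<bar>circ_deriv (f^^per f p) p\<bar> > 1"
      using ne1 by (force simp: multiplier_def)
    show False
    proof (rule no_global_attractor[of "fi f" ?P "per f"])
      show "\<And>m. continuous_on S1 (fi f^^m)" by (rule fincont[OF D])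
      show "\<And>m. (fi f^^m) ` S1 = S1" by (rule finimg)
      show "finite ?P" "?P \<subseteq> S1" by (fact fin, fact PS)
      show "\<And>p. p \<in> ?P \<Longrightarrow> per f p \<ge> 1" by (fact Npos)
      show "\<And>p. p \<in> ?P \<Longrightarrow> (fi f^^per f p) p = p" using fin_fix Nfix PS by blast
    next
      fix p assume p: "p \<in> ?P"
      show "\<exists>\<rho>>0. \<exists>lam. 0 \<le> lam \<and> lam < 1 \<and> (\<forall>z\<in>S1. dist z p < \<rho> \<longrightarrow> dist ((fi f^^per f p) z) p \<le> lam * dist z p)"
        using repel_inv[OF _ Nfix[OF p] gt[OF p]] p PS by blast
    next
      fix z assume z: "z \<in> S1"
      show "\<exists>p\<in>?P. \<forall>e>0. \<exists>m. dist ((fi f^^m) z) p < e"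
      proof (rule acc_gen)
        show "\<And>m. (fi f^^m) z \<in> S1" using finS1[OF D z] .
        fix i j :: nat assume "i < j"
        have "(fi f^^((j - i) + i)) z = (fi f^^(j - i)) ((fi f^^i) z)" by (simp add: funpow_add)
        moreover have "(j - i) + i = j" using \<open>i < j\<close> by simp
        ultimately have "(fi f^^j) z = (fi f^^(j - i)) ((fi f^^i) z)" by simp
        then have "(f^^(j - i)) ((fi f^^j) z) = (fi f^^i) z"
          using fn_fin[OF D finS1[OF D z]] by simp
        then show "\<exists>n\<ge>1. (f^^n) ((fi f^^i) z) = (fi f^^j) z \<or> (f^^n) ((fi f^^j) z) = (fi f^^i) z"
          using \<open>i < j\<close> by (intro exI[of _ "j - i"]) auto
      qed
    qed
  qed
qed

end


lemma S1_dist_le2: "a \<in> S1 \<Longrightarrow> b \<in> S1 \<Longrightarrow> dist a b \<le> 2"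
  using norm_triangle_ineq4[of a b] by (simp add: dist_norm S1_iff)

lemma hd_le:
  assumes "e > 0" "\<And>a. a \<in> A \<Longrightarrow> infdist a B < e" "\<And>b. b \<in> B \<Longrightarrow> infdist b A < e"
  shows "hausdorff_dist A B \<le> e"
  unfolding hausdorff_dist_def
proof (rule cInf_lower)
  show "e \<in> {e. e > 0 \<and> A \<subseteq> nbhd B e \<and> B \<subseteq> nbhd A e}" using assms by (auto simp: nbhd_def)
  show "bdd_below {e. e > 0 \<and> A \<subseteq> nbhd B e \<and> B \<subseteq> nbhd A e}" by (rule bdd_belowI[of _ 0]) auto
qed

lemma hd_lt:
  assumes "A \<subseteq> S1" "B \<subseteq> S1" "A \<noteq> {}" "B \<noteq> {}" "hausdorff_dist A B < e"
  shows "\<forall>a\<in>A. infdist a B < e" "\<forall>b\<in>B. infdist b A < e"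
proof -
  let ?S = "{e. e > 0 \<and> A \<subseteq> nbhd B e \<and> B \<subseteq> nbhd A e}"
  have "3 \<in> ?S"
  proof -
    have "infdist a B < 3" if "a \<in> A" for a
    proof -
      obtain b where "b \<in> B" using assms(4) by blast
      then have "infdist a B \<le> dist a b" by (rule infdist_le)
      also have "\<dots> \<le> 2" using S1_dist_le2 assms(1,2) that \<open>b \<in> B\<close> by blast
      finally show ?thesis by simp
    qed
    moreover have "infdist b A < 3" if "b \<in> B" for b
    proof -
      obtain a where "a \<in> A" using assms(3) by blast
      then have "infdist b A \<le> dist b a" by (rule infdist_le)
      also have "\<dots> \<le> 2" using S1_dist_le2 assms(1,2) that \<open>a \<in> A\<close> by blast
      finally show ?thesis by simp
    qed
    ultimately have "A \<subseteq> nbhd B 3" "B \<subseteq> nbhd A 3" unfolding nbhd_def by blast+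
    then show ?thesis by simp
  qed
  then have "?S \<noteq> {}" by blast
  moreover have "Inf ?S < e" using assms(5) unfolding hausdorff_dist_def .
  ultimately obtain e' where e': "e' \<in> ?S" "e' < e" by (meson cInf_lessD)
  then have "A \<subseteq> nbhd B e'" "B \<subseteq> nbhd A e'" by auto
  then show "\<forall>a\<in>A. infdist a B < e" "\<forall>b\<in>B. infdist b A < e" using e'(2) unfolding nbhd_def by fastforce+
qed

lemma infdist_ltE:
  assumes "infdist x A < e" "A \<noteq> {}"
  obtains a where "a \<in> A" "dist x a < e"
proof -
  have "(INF a\<in>A. dist x a) < e" using assms by (simp add: infdist_def)
  then obtain a where "a \<in> A" "dist x a < e" using cInf_lessD[of "(\<lambda>a. dist x a) ` A" e] assms(2) by auto
  then show ?thesis using that by blast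
qed

lemma exists_at_dist:
  assumes c: "c \<in> S1" and s: "0 \<le> s" "s \<le> 2"
  obtains w where "w \<in> S1" "dist w c = s"
proof -
  have "continuous_on {0..pi} (\<lambda>a. cmod (cis a - 1))"
    by (intro continuous_intros)
  moreover have "cmod (cis 0 - 1) \<le> s" using s by simp
  moreover have "s \<le> cmod (cis pi - 1)" using s by simp
  ultimately obtain a where a: "cmod (cis a - 1) = s"
    using IVT'[of "\<lambda>a. cmod (cis a - 1)" 0 s pi] pi_gt3 by auto
  have "c * cis a - c = c * (cis a - 1)" by (simp add: algebra_simps)
  then have "dist (c * cis a) c = cmod c * cmod (cis a - 1)"
    by (simp add: dist_norm norm_mult)
  then have "dist (c * cis a) c = s" using a c by (simp add: S1_iff)
  moreover have "c * cis a \<in> S1" using c by (simp add: S1_iff norm_mult)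
  ultimately show ?thesis using that by blast
qed

lemma jump:
  assumes K: "K \<subseteq> S1" and c: "c \<in> S1" and s: "0 < s" "s \<le> 2" and sub: "S1 - K \<subseteq> ball c s"
  shows "hausdorff_dist K S1 \<le> 3 * s" "hausdorff_dist S1 K \<le> 3 * s"
proof -
  obtain w where w: "w \<in> S1" "dist w c = s" using exists_at_dist[OF c less_imp_le[OF s(1)] s(2)] by blast
  have wK: "w \<in> K" using sub w by (auto simp: dist_commute)
  have A: "infdist a S1 < 3 * s" if "a \<in> K" for a using that K s by (auto simp: infdist_zero)
  have B: "infdist b K < 3 * s" if b: "b \<in> S1" for b
  proof (cases "b \<in> K")
    case True then show ?thesis using s by simp
  next
    case False
    then have "dist c b < s" using sub b by auto
    then have "dist b w < 2 * s" using w dist_triangle[of b w c] by (simp add: dist_commute)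
    moreover have "infdist b K \<le> dist b w" using wK by (rule infdist_le)
    ultimately show ?thesis using s by simp
  qed
  show "hausdorff_dist K S1 \<le> 3 * s" using s A B by (intro hd_le) auto
  show "hausdorff_dist S1 K \<le> 3 * s" using s A B by (intro hd_le) auto
qed

lemma hd_self: "A \<subseteq> S1 \<Longrightarrow> e > 0 \<Longrightarrow> hausdorff_dist A A \<le> e"
  by (intro hd_le) auto

definition arcK :: "complex \<Rightarrow> real \<Rightarrow> complex set" where
  "arcK c b = (\<lambda>t. c * cis t) ` {b..2*pi - b}"

lemma arcK_cont: assumes "c \<in> S1" "0 < b" "b < pi" shows "arcK c b \<in> continua S1"
proof -
  have "arcK c b \<subseteq> S1" using assms by (auto simp: arcK_def S1_iff norm_mult)
  moreover have "arcK c b \<noteq> {}" using assms by (auto simp: arcK_def)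
  moreover have "compact (arcK c b)" unfolding arcK_def
    by (intro compact_continuous_image continuous_intros) auto
  moreover have "connected (arcK c b)" unfolding arcK_def
    by (intro connected_continuous_image continuous_intros) auto
  ultimately show ?thesis by (simp add: continua_def)
qed

lemma arcK_notin: assumes "c \<in> S1" "0 < b" "b < pi" shows "c \<notin> arcK c b"
proof
  assume "c \<in> arcK c b"
  then obtain t where t: "t \<in> {b..2*pi - b}" "c * cis t = c" by (auto simp: arcK_def)
  then have "cis t = 1" using assms(1) S1_nz by (metis mult_cancel_left2)
  then have "cos t = 1" by (metis cis.sel(1) one_complex.sel(1))
  then obtain k :: int where k: "t = real_of_int k * (2 * pi)" using cos_one_2pi_int[of t] by auto
  have "0 < t" "t < 2 * pi" using t assms by auto
  then have "0 < real_of_int k * (2 * pi)" "real_of_int k * (2 * pi) < 1 * (2 * pi)" using k by auto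
  then have "0 < real_of_int k" "real_of_int k < 1" using pi_gt_zero
    by (simp_all add: zero_less_mult_iff mult_less_cancel_right)
  then have "0 < k" "k < 1" by simp_all
  then show False by linarith
qed

lemma arcK_compl:
  assumes c: "c \<in> S1" and b: "0 < b" "b < pi" and small: "\<forall>t. \<bar>t\<bar> < b \<longrightarrow> dist (cis t) 1 < s"
  shows "S1 - arcK c b \<subseteq> ball c s"
proof
  fix z assume z: "z \<in> S1 - arcK c b"
  define th where "th = Arg (z / c)"
  have "z / c \<in> S1" using z c by (simp add: S1_iff norm_divide)
  then have "cis th = z / c" unfolding th_def by (rule cis_Arg_S1)
  then have zc: "z = c * cis th" using S1_nz[OF c] by simp
  have th: "- pi < th" "th \<le> pi" using Arg_bounded[of "z / c"] unfolding th_def by auto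
  have "\<bar>th\<bar> < b"
  proof (rule ccontr)
    assume "\<not> \<bar>th\<bar> < b"
    then consider "th \<ge> b" | "th \<le> -b" by linarith
    then show False
    proof cases
      case 1
      then have "th \<in> {b..2*pi - b}" using th b by auto
      then show False using z zc by (auto simp: arcK_def)
    next
      case 2
      then have "th + 2*pi \<in> {b..2*pi - b}" using th b by auto
      moreover have "c * cis (th + 2*pi) = z" using zc by (simp add: cis_mult[symmetric])
      ultimately show False using z unfolding arcK_def by (metis DiffD2 imageI)
    qed
  qed
  then have "dist (cis th) 1 < s" using small by blast
  moreover have "z - c = c * (cis th - 1)" using zc by (simp add: algebra_simps)
  then have "dist z c = cmod c * cmod (cis th - 1)" by (simp only: dist_norm norm_mult)
  then have "dist z c = dist (cis th) 1" using c unfolding S1_iff by (simp add: dist_norm)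
  ultimately have "dist z c < s" by simp
  then show "z \<in> ball c s" by (simp add: dist_commute)
qed


definition hp :: "complex \<Rightarrow> complex \<Rightarrow> complex \<Rightarrow> real" where
  "hp p q z = Im ((z - p) * cnj (q - p))"

lemma hp_zero:
  assumes p: "p \<in> S1" and q: "q \<in> S1" and z: "z \<in> S1" and pq: "p \<noteq> q" and h: "hp p q z = 0"
  shows "z = p \<or> z = q"
proof -
  define d where "d = q - p"
  have d0: "d \<noteq> 0" using pq by (simp add: d_def)
  define w where "w = (z - p) / d"
  have dd: "of_real ((cmod d)^2) = d * cnj d" by (rule complex_norm_square)
  have "w = (z - p) * cnj d / (d * cnj d)" using d0 by (simp add: w_def)
  then have "w = (z - p) * cnj d / of_real ((cmod d)^2)" by (simp only: dd)
  then have "Im w = hp p q z / (cmod d)^2" by (simp add: hp_def d_def Im_divide_of_real)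
  then have "Im w = 0" using h by simp
  then have wt: "w = of_real (Re w)" by (simp add: complex_eq_iff)
  define t where "t = Re w"
  have zt: "z = p + of_real t * (q - p)" using wt d0 unfolding t_def w_def d_def
    by (metis add.commute diff_add_cancel divide_eq_eq mult.commute)
  obtain a b where pab: "p = Complex a b" by (cases p)
  obtain c e where qce: "q = Complex c e" by (cases q)
  have n1: "a^2 + b^2 = 1" using p pab by (simp add: S1_iff cmod_def)
  have n2: "c^2 + e^2 = 1" using q qce by (simp add: S1_iff cmod_def)
  have "Re z = a + t * (c - a)" "Im z = b + t * (e - b)" using zt pab qce by simp_all
  moreover have "(Re z)^2 + (Im z)^2 = 1" using z by (simp add: S1_iff cmod_def)
  ultimately have n3: "(a + t * (c - a))^2 + (b + t * (e - b))^2 = 1" by simp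
  have "t * (t - 1) * ((c - a)^2 + (e - b)^2) = 0" using n1 n2 n3 by algebra
  moreover have "(c - a)^2 + (e - b)^2 \<noteq> 0" using pq pab qce by (auto simp: sum_power2_eq_zero_iff)
  ultimately have "t * (t - 1) = 0" by auto
  then have "t = 0 \<or> t = 1" by auto
  then show ?thesis using zt by auto
qed

lemma halfplane:
  assumes p: "p \<in> S1" and q: "q \<in> S1" and pq: "p \<noteq> q"
  shows "\<exists>m1 m2 c0. c0 > 0 \<and> m1 \<in> S1 \<and> m2 \<in> S1 \<and> (\<forall>z. dist z m1 < c0 \<longrightarrow> hp p q z > 0)
          \<and> (\<forall>z. dist z m2 < c0 \<longrightarrow> hp p q z < 0)"
proof -
  define d where "d = q - p"
  define L where "L = cmod d"
  have L0: "L > 0" using pq by (simp add: L_def d_def)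
  define m1 where "m1 = \<i> * d / of_real L"
  have m1S: "m1 \<in> S1" using L0 by (simp add: S1_iff m1_def norm_mult norm_divide L_def)
  have m2S: "- m1 \<in> S1" using m1S by (simp add: S1_iff)
  have dd: "d * cnj d = of_real (L^2)" unfolding L_def by (rule complex_norm_square[symmetric])
  have pp: "p * cnj p = 1" using p complex_norm_square[of p] by (simp add: S1_iff)
  have "m1 * cnj d = \<i> * (d * cnj d) / of_real L" by (simp add: m1_def)
  also have "\<dots> = \<i> * of_real L" using L0 unfolding dd by (simp add: power2_eq_square)
  finally have m1d: "m1 * cnj d = \<i> * of_real L" .
  have pd: "p * cnj d = p * cnj q - 1" using pp by (simp add: d_def algebra_simps)
  have "(m1 - p) * cnj d = \<i> * of_real L - (p * cnj q - 1)" using m1d pd by (simp add: algebra_simps)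
  then have hm1: "hp p q m1 = L - Im (p * cnj q)" by (simp add: hp_def d_def[symmetric])
  have "(- m1 - p) * cnj d = - (\<i> * of_real L) - (p * cnj q - 1)" using m1d pd by (simp add: algebra_simps)
  then have hm2: "hp p q (- m1) = - L - Im (p * cnj q)" by (simp add: hp_def d_def[symmetric])
  have key: "\<bar>Im (p * cnj q)\<bar> < L"
  proof -
    obtain a b where pab: "p = Complex a b" by (cases p)
    obtain c e where qce: "q = Complex c e" by (cases q)
    have n1: "a^2 + b^2 = 1" using p pab by (simp add: S1_iff cmod_def)
    have n2: "c^2 + e^2 = 1" using q qce by (simp add: S1_iff cmod_def)
    have L2: "L^2 = (c - a)^2 + (e - b)^2" using pab qce by (simp add: L_def d_def cmod_def)
    have im: "Im (p * cnj q) = b * c - a * e" using pab qce by simp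
    have "4 * ((c - a)^2 + (e - b)^2 - (b * c - a * e)^2) = ((c - a)^2 + (e - b)^2)^2"
      using n1 n2 by algebra
    then have X: "4 * (L^2 - (Im (p * cnj q))^2) = (L^2)^2" using L2 im by simp
    define X where "X = (Im (p * cnj q))^2"
    define Y where "Y = L^2"
    have "4 * (Y - X) = Y^2" using X unfolding X_def Y_def .
    moreover have "Y^2 > 0" using L0 by (simp add: Y_def)
    ultimately have "4 * (Y - X) > 0" by simp
    then have "X < Y" by simp
    then have "(\<bar>Im (p * cnj q)\<bar>)^2 < L^2" by (simp add: X_def Y_def)
    then show ?thesis using L0 power2_less_imp_less[of "\<bar>Im (p * cnj q)\<bar>" L] by simp
  qed
  have pos: "hp p q m1 > 0" and neg: "hp p q (- m1) < 0" using hm1 hm2 key by auto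
  have hc: "isCont (hp p q) x" for x unfolding hp_def isCont_def by (intro tendsto_intros)
  obtain c1 where c1: "c1 > 0" "\<forall>z. dist z m1 < c1 \<longrightarrow> dist (hp p q z) (hp p q m1) < hp p q m1"
    using hc[of m1] pos unfolding continuous_at_eps_delta by blast
  obtain c2 where c2: "c2 > 0" "\<forall>z. dist z (- m1) < c2 \<longrightarrow> dist (hp p q z) (hp p q (- m1)) < - hp p q (- m1)"
    using hc[of "- m1"] neg unfolding continuous_at_eps_delta by (meson neg_0_less_iff_less)
  show ?thesis
  proof (rule exI[of _ m1], rule exI[of _ "- m1"], rule exI[of _ "min c1 c2"], intro conjI m1S m2S allI impI)
    show "min c1 c2 > 0" using c1 c2 by simp
  next
    fix z assume "dist z m1 < min c1 c2"
    then have "dist (hp p q z) (hp p q m1) < hp p q m1" using c1 by auto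
    then show "hp p q z > 0" by (simp add: dist_real_def)
  next
    fix z assume "dist z (- m1) < min c1 c2"
    then have "dist (hp p q z) (hp p q (- m1)) < - hp p q (- m1)" using c2 by auto
    then show "hp p q z < 0" by (simp add: dist_real_def)
  qed
qed


lemma it_contr:
  assumes g: "\<And>z. z \<in> S1 \<Longrightarrow> g z \<in> S1" and l: "0 \<le> l" "l \<le> 1"
    and c: "\<forall>z\<in>S1. dist z c < \<rho> \<longrightarrow> dist (g z) c \<le> l * dist z c"
    and z: "z \<in> S1" "dist z c < \<rho>"
  shows "dist ((g^^j) z) c \<le> l^j * dist z c"
proof (induction j)
  case 0 then show ?case by simp
next
  case (Suc j)
  have gj: "(g^^j) z \<in> S1" using g z(1) by (induction j) auto
  have "l^j * dist z c \<le> dist z c" using l by (simp add: mult_left_le_one_le power_le_one)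
  then have "dist ((g^^j) z) c < \<rho>" using Suc z(2) by linarith
  then have "dist (g ((g^^j) z)) c \<le> l * dist ((g^^j) z) c" using c gj by blast
  also have "\<dots> \<le> l * (l^j * dist z c)" using Suc l by (intro mult_left_mono) auto
  finally show ?case by simp
qed

lemma funpow_fix: "g c = c \<Longrightarrow> (g^^j) c = c"
  by (induction j) auto

lemma cont_img:
  assumes "K \<in> continua S1" "continuous_on S1 g" "\<And>z. z \<in> S1 \<Longrightarrow> g z \<in> S1"
  shows "g ` K \<in> continua S1"
proof -
  have K: "K \<subseteq> S1" "K \<noteq> {}" "compact K" "connected K" using assms(1) by (auto simp: continua_def)
  have c: "continuous_on K g" using continuous_on_subset[OF assms(2) K(1)] .
  show ?thesis unfolding continua_def using K assms(3) compact_continuous_image[OF c K(3)]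
      connected_continuous_image[OF c K(4)] by auto
qed

lemma S1_cont: "S1 \<in> continua S1"
  unfolding continua_def using compact_S1 connected_sphere_eq[of "0::complex" 1]
  by (auto simp: S1_def intro!: exI[of _ 1])

lemma iter_img: fixes f :: "'a \<Rightarrow> 'a" shows "((\<lambda>A. f ` A)^^k) x = (f^^k) ` x"
proof (induction k)
  case (Suc k)
  have "((\<lambda>A. f ` A)^^Suc k) x = f ` (((\<lambda>A. f ` A)^^k) x)" by simp
  also have "\<dots> = f ` ((f^^k) ` x)" using Suc by simp
  also have "\<dots> = (f^^Suc k) ` x" by (simp add: image_comp)
  finally show ?case .
qed simp

lemma iter_int_pos: fixes f :: "'a \<Rightarrow> 'a" shows "iter_int Y (\<lambda>A. f ` A) (int k) x = (f^^k) ` x"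
  by (simp add: iter_int_def iter_img)

lemma cis_small: "e > 0 \<Longrightarrow> \<exists>b. 0 < b \<and> b < pi \<and> (\<forall>t. \<bar>t\<bar> < b \<longrightarrow> dist (cis t) 1 < e)"
proof -
  assume e: "e > 0"
  have "isCont (\<lambda>t. cis t) 0" using cis_vd has_vector_derivative_continuous by blast
  then obtain b0 where b0: "b0 > 0" "\<forall>t. dist t 0 < b0 \<longrightarrow> dist (cis t) (cis 0) < e"
    using e unfolding continuous_at_eps_delta by blast
  show ?thesis using b0 pi_gt3
    by (intro exI[of _ "min b0 1"]) (auto simp: dist_real_def)
qed


theorem theoremA:
  fixes f :: "complex \<Rightarrow> complex"
  assumes "morse_smale_circle f"
  shows "\<not> shadowing (continua S1) hausdorff_dist (\<lambda>A. f ` A)"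
proof
  assume sh: "shadowing (continua S1) hausdorff_dist (\<lambda>A. f ` A)"
  have D: "circle_C1_diffeo f" using assms by (simp add: morse_smale_circle_def)
  have PP: "\<And>p. p \<in> nonwandering f \<Longrightarrow> periodic_pt f p" using assms by (simp add: morse_smale_circle_def)
  obtain p where p: "p \<in> nonwandering f" "\<bar>multiplier f p\<bar> > 1" using rep_att_exist(1)[OF D assms] by blast
  obtain q where q: "q \<in> nonwandering f" "\<bar>multiplier f q\<bar> < 1" using rep_att_exist(2)[OF D assms] by blast
  have pS: "p \<in> S1" and qS: "q \<in> S1" using p(1) q(1) by (auto simp: nonwandering_def)
  have pq: "p \<noteq> q" using p(2) q(2) by auto
  define np where "np = per f p"
  define nq where "nq = per f q"
  have np1: "np \<ge> 1" and fixp: "(f^^np) p = p" using per_props[OF PP[OF p(1)]] by (auto simp: np_def)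
  have nq1: "nq \<ge> 1" and fixq: "(f^^nq) q = q" using per_props[OF PP[OF q(1)]] by (auto simp: nq_def)
  obtain \<sigma>p mu where sp: "\<sigma>p > 0" "0 \<le> mu" "mu < 1"
    "\<forall>z\<in>S1. dist z p < \<sigma>p \<longrightarrow> dist ((fi f^^np) z) p \<le> mu * dist z p"
    using repel_inv[OF D pS fixp] p(2) unfolding multiplier_def np_def by blast
  obtain \<rho>q lq0 where rq: "\<rho>q > 0" "lq0 < 1"
    "\<forall>z\<in>S1. dist z q < \<rho>q \<longrightarrow> dist ((f^^nq) z) q \<le> lq0 * dist z q"
    using attract[OF D qS fixq] q(2) unfolding multiplier_def nq_def by blast
  define lq where "lq = max lq0 0"
  have lq: "0 \<le> lq" "lq < 1" using rq(2) by (auto simp: lq_def)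
  have rq3: "\<forall>z\<in>S1. dist z q < \<rho>q \<longrightarrow> dist ((f^^nq) z) q \<le> lq * dist z q"
  proof (intro ballI impI)
    fix z assume "z \<in> S1" "dist z q < \<rho>q"
    then have "dist ((f^^nq) z) q \<le> lq0 * dist z q" using rq(3) by blast
    also have "\<dots> \<le> lq * dist z q" by (intro mult_right_mono) (auto simp: lq_def)
    finally show "dist ((f^^nq) z) q \<le> lq * dist z q" .
  qed
  obtain m1 m2 c0 where hpl: "c0 > 0" "m1 \<in> S1" "m2 \<in> S1" "\<forall>z. dist z m1 < c0 \<longrightarrow> hp p q z > 0"
      "\<forall>z. dist z m2 < c0 \<longrightarrow> hp p q z < 0"
    using halfplane[OF pS qS pq] by blast
  define \<epsilon> where "\<epsilon> = min c0 (min \<sigma>p \<rho>q)"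
  have eps: "\<epsilon> > 0" "\<epsilon> \<le> c0" "\<epsilon> \<le> \<sigma>p" "\<epsilon> \<le> \<rho>q" using hpl(1) sp(1) rq(1) by (auto simp: \<epsilon>_def)
  let ?C = "continua S1"
  let ?F = "\<lambda>A. f ` A"
  obtain \<delta> where del: "\<delta> > 0" and shd: "\<forall>y :: int \<Rightarrow> complex set.
        (\<forall>n. y n \<in> ?C) \<and> (\<forall>n. hausdorff_dist (?F (y n)) (y (n + 1)) \<le> \<delta>) \<longrightarrow>
        (\<exists>x\<in>?C. \<forall>n. hausdorff_dist (y n) (iter_int ?C ?F n x) < \<epsilon>)"
    using sh eps(1) unfolding shadowing_def by blast
  define s where "s = min (\<delta>/3) 1"
  have s: "0 < s" "s \<le> 2" "3 * s \<le> \<delta>" using del by (auto simp: s_def)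
  obtain \<beta>q where bq: "0 < \<beta>q" "\<beta>q < pi" "\<forall>t. \<bar>t\<bar> < \<beta>q \<longrightarrow> dist (cis t) 1 < s"
    using cis_small[OF s(1)] by blast
  define Kq where "Kq = arcK q \<beta>q"
  have Kq: "Kq \<in> ?C" unfolding Kq_def by (rule arcK_cont[OF qS bq(1,2)])
  have KqS: "Kq \<subseteq> S1" "Kq \<noteq> {}" "compact Kq" using Kq by (auto simp: continua_def)
  have Kqc: "S1 - Kq \<subseteq> ball q s" unfolding Kq_def by (rule arcK_compl[OF qS bq])
  have jq: "hausdorff_dist Kq S1 \<le> \<delta>"
    using jump(1)[OF KqS(1) qS s(1,2) Kqc] s(3) by linarith
  obtain b where b: "b > 0" "\<forall>z\<in>S1. dist z p < b \<longrightarrow> dist (f z) (f p) < s"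
    using fcont[OF D] pS s(1) unfolding continuous_on_iff by blast
  obtain \<beta>p where bp: "0 < \<beta>p" "\<beta>p < pi" "\<forall>t. \<bar>t\<bar> < \<beta>p \<longrightarrow> dist (cis t) 1 < b"
    using cis_small[OF b(1)] by blast
  define Kp where "Kp = arcK p \<beta>p"
  have Kp: "Kp \<in> ?C" unfolding Kp_def by (rule arcK_cont[OF pS bp(1,2)])
  have KpS: "Kp \<subseteq> S1" "Kp \<noteq> {}" "compact Kp" using Kp by (auto simp: continua_def)
  have fKp: "f ` Kp \<subseteq> S1" using KpS fS1[OF D] by blast
  have Kpc: "S1 - Kp \<subseteq> ball p b" unfolding Kp_def by (rule arcK_compl[OF pS bp])
  have "S1 - f ` Kp \<subseteq> ball (f p) s"
  proof
    fix z assume z: "z \<in> S1 - f ` Kp"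
    then obtain w where w: "w \<in> S1" "z = f w" using fimg[OF D] by blast
    then have "w \<notin> Kp" using z by blast
    then have "dist w p < b" using Kpc w by (auto simp: dist_commute)
    then have "dist (f w) (f p) < s" using b w by blast
    then show "z \<in> ball (f p) s" using w by (simp add: dist_commute)
  qed
  then have jp: "hausdorff_dist S1 (f ` Kp) \<le> \<delta>"
    using jump(2)[OF fKp fS1[OF D pS] s(1,2)] s(3) by linarith
  define rp where "rp = infdist p Kp"
  define rqq where "rqq = infdist q Kq"
  have rp: "rp > 0" unfolding rp_def
    using KpS arcK_notin[OF pS bp(1,2)] by (intro infdist_pos_not_in_closed) (auto simp: Kp_def compact_imp_closed)
  have rqq: "rqq > 0" unfolding rqq_def
    using KqS arcK_notin[OF qS bq(1,2)] by (intro infdist_pos_not_in_closed) (auto simp: Kq_def compact_imp_closed)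
  obtain j0 where j0: "lq ^ j0 < rqq / \<epsilon>" using real_arch_pow_inv[of "rqq / \<epsilon>" lq] rqq eps(1) lq by auto
  define jq' where "jq' = Suc j0"
  have jqle: "lq ^ jq' \<le> lq ^ j0" unfolding jq'_def using lq by (intro power_decreasing) auto
  obtain i0 where i0: "mu ^ i0 < rp / \<epsilon>" using real_arch_pow_inv[of "rp / \<epsilon>" mu] rp eps(1) sp by auto
  define jp' where "jp' = Suc i0"
  have jple: "mu ^ jp' \<le> mu ^ i0" unfolding jp'_def using sp by (intro power_decreasing) auto
  define T where "T = nq * jq'"
  have T1: "T \<ge> 1" using nq1 by (simp add: T_def jq'_def)
  define P where "P = np * jp'"
  have P1: "P \<ge> 1" using np1 by (simp add: P_def jp'_def)
  define y :: "int \<Rightarrow> complex set" where "y = (\<lambda>n. if n < int T then (fi f ^^ nat (int T - n)) ` Kq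
      else if n = int T then S1 else (f ^^ nat (n - int T)) ` Kp)"
  have fiS: "\<And>z. z \<in> S1 \<Longrightarrow> (fi f^^k) z \<in> S1" for k using finS1[OF D] by blast
  have fnS: "\<And>z. z \<in> S1 \<Longrightarrow> (f^^k) z \<in> S1" for k using fnS1[OF D] by blast
  have yC: "y n \<in> ?C" for n
  proof -
    consider "n < int T" | "n = int T" | "n > int T" by linarith
    then show ?thesis
    proof cases
      case 1 then show ?thesis unfolding y_def using cont_img[OF Kq fincont[OF D] fiS] by simp
    next
      case 2 then show ?thesis unfolding y_def using S1_cont by simp
    next
      case 3 then show ?thesis unfolding y_def using cont_img[OF Kp fncont[OF D] fnS] by simp
    qed
  qed
  have yS: "y n \<subseteq> S1" "y n \<noteq> {}" for n using yC[of n] by (auto simp: continua_def)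
  have f_fiK: "f ` ((fi f^^Suc k) ` K) = (fi f^^k) ` K" if "K \<subseteq> S1" for k K
  proof -
    have "f ((fi f^^Suc k) z) = (fi f^^k) z" if "z \<in> K" for z
      using f_fi[OF D fiS[of z k]] that \<open>K \<subseteq> S1\<close> by auto
    then show ?thesis by (auto simp: image_comp image_iff)
  qed
  have f_fK: "f ` ((f^^k) ` K) = (f^^Suc k) ` K" for k K by (simp add: image_comp)
  have pseudo: "hausdorff_dist (?F (y n)) (y (n + 1)) \<le> \<delta>" for n
  proof -
    consider "n + 1 < int T" | "n + 1 = int T" | "n = int T" | "n > int T" by linarith
    then show ?thesis
    proof cases
      case 1
      define k where "k = nat (int T - (n + 1))"
      have "nat (int T - n) = Suc k" using 1 by (simp add: k_def)
      then have "?F (y n) = (fi f^^k) ` Kq" using 1 f_fiK[OF KqS(1), of k] by (simp add: y_def)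
      moreover have "y (n + 1) = (fi f^^k) ` Kq" using 1 by (simp add: y_def k_def)
      ultimately show ?thesis using hd_self[OF yS(1)[of "n + 1"] del] by simp
    next
      case 2
      then have "nat (int T - n) = Suc 0" by simp
      then have "?F (y n) = Kq" using 2 f_fiK[OF KqS(1), of 0] by (simp add: y_def)
      moreover have "y (n + 1) = S1" using 2 by (simp add: y_def)
      ultimately show ?thesis using jq by simp
    next
      case 3
      then have "?F (y n) = S1" using fimg[OF D] by (simp add: y_def)
      moreover have "y (n + 1) = f ` Kp" using 3 by (simp add: y_def)
      ultimately show ?thesis using jp by simp
    next
      case 4
      define k where "k = nat (n - int T)"
      have "nat (n + 1 - int T) = Suc k" using 4 by (simp add: k_def)
      then have "y (n + 1) = (f^^Suc k) ` Kp" using 4 by (simp add: y_def)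
      moreover have "?F (y n) = (f^^Suc k) ` Kp" using 4 f_fK by (simp add: y_def k_def)
      ultimately show ?thesis using hd_self[OF yS(1)[of "n + 1"] del] by simp
    qed
  qed
  obtain x where x: "x \<in> ?C" and hx: "\<And>n. hausdorff_dist (y n) (iter_int ?C ?F n x) < \<epsilon>"
    using shd yC pseudo by blast
  have xS: "x \<subseteq> S1" "x \<noteq> {}" using x by (auto simp: continua_def)
  have Xn: "iter_int ?C ?F (int k) x = (f^^k) ` x" for k by (rule iter_int_pos)
  have XnS: "(f^^k) ` x \<subseteq> S1" "(f^^k) ` x \<noteq> {}" for k using xS fnS by auto
  have qx: "q \<notin> x"
  proof
    assume qx: "q \<in> x"
    have "hausdorff_dist (y 0) x < \<epsilon>" using hx[of 0] Xn[of 0] by simp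
    then have "infdist q (y 0) < \<epsilon>" using hd_lt(2)[OF yS(1) xS(1) yS(2) xS(2)] qx by blast
    then obtain a where a: "a \<in> y 0" "dist q a < \<epsilon>" using infdist_ltE yS(2) by blast
    have y0: "y 0 = (fi f^^T) ` Kq" using T1 by (simp add: y_def)
    then obtain w where w: "w \<in> Kq" "a = (fi f^^T) w" using a(1) by blast
    have wS: "w \<in> S1" using w KqS by blast
    have aS: "a \<in> S1" using w(2) fiS wS by simp
    have fa: "(f^^T) a = w" using w(2) fn_fin[OF D wS] by simp
    have "(f^^T) = ((f^^nq)^^jq')" by (simp add: T_def funpow_mult)
    then have eqw: "dist w q = dist (((f^^nq)^^jq') a) q" using fa by simp
    have aq: "dist a q < \<rho>q" using a(2) eps(4) dist_commute[of q a] by linarith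
    have "dist w q \<le> lq^jq' * dist a q"
      using eqw it_contr[OF fnS lq(1) less_imp_le[OF lq(2)] rq3 aS aq] by simp
    also have "\<dots> \<le> lq^j0 * \<epsilon>" using jqle a(2) lq by (intro mult_mono) (auto simp: dist_commute)
    also have "\<dots> < rqq" using j0 eps(1) by (simp add: pos_less_divide_eq)
    finally have "dist q w < infdist q Kq" by (simp add: rqq_def dist_commute)
    then show False using infdist_le[OF w(1), of q] by simp
  qed
  define XT where "XT = (f^^T) ` x"
  have XTS: "XT \<subseteq> S1" "XT \<noteq> {}" using XnS unfolding XT_def by auto
  have dens: "\<exists>b\<in>XT. dist a b < \<epsilon>" if a: "a \<in> S1" for a
  proof -
    have "hausdorff_dist S1 XT < \<epsilon>" using hx[of "int T"] Xn[of T] by (simp add: y_def XT_def)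
    then have "infdist a XT < \<epsilon>" using hd_lt(1)[of S1 XT] XTS a by auto
    then obtain b where "b \<in> XT" "dist a b < \<epsilon>" using XTS(2) by (rule infdist_ltE)
    then show ?thesis by blast
  qed
  have pXT: "p \<notin> XT"
  proof
    assume pX: "p \<in> XT"
    have Pp: "(f^^P) p = p" unfolding P_def funpow_mult[symmetric] by (rule funpow_fix[of "f^^np", OF fixp])
    have "(f^^P) ` XT = (f^^(P + T)) ` x" by (simp add: XT_def funpow_add image_comp)
    moreover have "(f^^P) p \<in> (f^^P) ` XT" using pX by (rule imageI)
    ultimately have pin: "p \<in> (f^^(P + T)) ` x" using Pp by simp
    have yPT: "y (int (P + T)) = (f^^P) ` Kp" using P1 by (simp add: y_def)
    have "hausdorff_dist ((f^^P) ` Kp) ((f^^(P + T)) ` x) < \<epsilon>" using hx[of "int (P + T)"] Xn[of "P + T"] yPT by simp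
    then have "infdist p ((f^^P) ` Kp) < \<epsilon>" using hd_lt(2)[OF yS(1) XnS(1) yS(2) XnS(2), of "int (P+T)" "P + T"] yPT pin by auto
    moreover have ne: "(f^^P) ` Kp \<noteq> {}" using KpS(2) by simp
    ultimately obtain a where a: "a \<in> (f^^P) ` Kp" "dist p a < \<epsilon>" by (rule infdist_ltE)
    then obtain w where w: "w \<in> Kp" "a = (f^^P) w" by blast
    have wS: "w \<in> S1" using w KpS by blast
    have aS: "a \<in> S1" using w(2) fnS wS by simp
    have fa: "(fi f^^P) a = w" using w(2) fin_fn[OF D wS] by simp
    have "(fi f^^P) = ((fi f^^np)^^jp')" by (simp add: P_def funpow_mult)
    then have eqw: "dist w p = dist (((fi f^^np)^^jp') a) p" using fa by simp
    have ap: "dist a p < \<sigma>p" using a(2) eps(3) dist_commute[of p a] by linarith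
    have "dist w p \<le> mu^jp' * dist a p"
      using eqw it_contr[OF fiS sp(2) less_imp_le[OF sp(3)] sp(4) aS ap] by simp
    also have "\<dots> \<le> mu^i0 * \<epsilon>" using jple a(2) sp by (intro mult_mono) (auto simp: dist_commute)
    also have "\<dots> < rp" using i0 eps(1) by (simp add: pos_less_divide_eq)
    finally have "dist p w < infdist p Kp" by (simp add: rp_def dist_commute)
    then show False using infdist_le[OF w(1), of p] by simp
  qed
  have qXT: "q \<notin> XT"
  proof
    assume "q \<in> XT"
    then obtain a where a: "a \<in> x" "q = (f^^T) a" by (auto simp: XT_def)
    have "(f^^T) q = q" unfolding T_def funpow_mult[symmetric] by (rule funpow_fix[of "f^^nq", OF fixq])
    then have "(f^^T) a = (f^^T) q" using a by simp
    then have "a = q" using fninj[OF D, of T] a(1) xS qS by (meson inj_onD subsetD)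
    then show False using a(1) qx by simp
  qed
  have XTc: "connected XT" unfolding XT_def
    using x connected_continuous_image[OF continuous_on_subset[OF fncont[OF D] xS(1)]] by (simp add: continua_def)
  obtain b1 where b1: "b1 \<in> XT" "dist m1 b1 < \<epsilon>" using dens[OF hpl(2)] by blast
  obtain b2 where b2: "b2 \<in> XT" "dist m2 b2 < \<epsilon>" using dens[OF hpl(3)] by blast
  have h1: "hp p q b1 > 0" using hpl(4) b1(2) eps(2) by (simp add: dist_commute)
  have h2: "hp p q b2 < 0" using hpl(5) b2(2) eps(2) by (simp add: dist_commute)
  have hpc: "continuous_on XT (hp p q)"
    unfolding hp_def by (intro continuous_at_imp_continuous_on ballI) (simp add: isCont_def tendsto_intros)
  have "connected (hp p q ` XT)" by (rule connected_continuous_image[OF hpc XTc])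
  then have U: "\<forall>x\<in>hp p q ` XT. \<forall>y\<in>hp p q ` XT. \<forall>z\<ge>x. z \<le> y \<longrightarrow> z \<in> hp p q ` XT"
    by (simp only: connected_iff_interval)
  have i1: "hp p q b1 \<in> hp p q ` XT" using b1(1) by (rule imageI)
  have i2: "hp p q b2 \<in> hp p q ` XT" using b2(1) by (rule imageI)
  have "\<forall>z\<ge>hp p q b2. z \<le> hp p q b1 \<longrightarrow> z \<in> hp p q ` XT" using U i1 i2 by blast
  then have "0 \<ge> hp p q b2 \<longrightarrow> 0 \<le> hp p q b1 \<longrightarrow> 0 \<in> hp p q ` XT" by blast
  then have "0 \<in> hp p q ` XT" using h1 h2 by simp
  then obtain b0 where b0': "0 = hp p q b0" "b0 \<in> XT" by (rule imageE)
  then have b0: "b0 \<in> XT" "hp p q b0 = 0" by simp_all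
  have "b0 \<in> S1" using b0(1) XTS(1) by blast
  then have "b0 = p \<or> b0 = q" using hp_zero[OF pS qS _ pq b0(2)] by blast
  then show False using b0(1) pXT qXT by blast
qed


end
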